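(* Let $I\subseteq\mathbb{R}$ be an open interval and let $f$ be a non-constant real analytic function on $I$ with $f(\mathbb{Q}\cap I)\subseteq\mathbb{Q}$. Assume there exists $\eta\in\mathbb{R}$ such that whenever $p/q\in I$ with $\gcd(p,q)=1$, $q\geq 2$, and $f(p/q)=p'/q'$ with $\gcd(p',q')=1$, one has $q'\leq q^{\eta}$. Then $f(\mathscr{L}\cap I)\subseteq\mathscr{L}$.
   Context: $\mathscr{L}$ denotes the set of Liouville numbers: real irrational numbers $\zeta$ such that for every $\eta>0$ the inequality $|\zeta-y/x|\leq x^{-\eta}$ has infinitely many rational solutions $y/x$ with $x\geq 1$. Fractions are written with positive denominators. *)

theory Defs
  imports "HOL-Analysis.Analysis"
begin

definition liouville_set :: "real set" where
  "liouville_set = {z. z \<notin> \<rat> \<and>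
     (\<forall>\<eta>>0. infinite {(y::int, x::int). x \<ge> 1 \<and>
          \<bar>z - real_of_int y / real_of_int x\<bar> \<le> real_of_int x powr (- \<eta>)})}"

definition open_interval :: "real set \<Rightarrow> bool" where
  "open_interval I \<longleftrightarrow> is_interval I \<and> open I \<and> I \<noteq> {}"

definition real_analytic_on :: "(real \<Rightarrow> real) \<Rightarrow> real set \<Rightarrow> bool" where
  "real_analytic_on f I \<longleftrightarrow>
     (\<forall>x0\<in>I. \<exists>r>0. \<exists>a :: nat \<Rightarrow> real.
        \<forall>x. \<bar>x - x0\<bar> < r \<longrightarrow> x \<in> I \<and> (\<lambda>n. a n * (x - x0) ^ n) sums f x)"

end

theory Submission
  imports Defs "HOL-Complex_Analysis.Cauchy_Integral_Formula"
begin


lemma loc_lip: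
  fixes b :: "nat \<Rightarrow> real" and g :: "real \<Rightarrow> real"
  assumes r: "r > 0" and sm: "\<And>t. \<bar>t\<bar> < r \<Longrightarrow> (\<lambda>n. b n * t^n) sums g t"
  shows "\<exists>e>0. \<exists>C>0. \<forall>t. \<bar>t\<bar> < e \<longrightarrow> \<bar>g t - b 0\<bar> \<le> C * \<bar>t\<bar>"
proof -
  define h where "h = (\<lambda>x::real. \<Sum>n. b n * x^n)"
  have "summable (\<lambda>n. b n * (r/2)^n)" using sm[of "r/2"] r by (auto dest: sums_summable)
  then have "DERIV h 0 :> (\<Sum>n. diffs b n * 0^n)"
    unfolding h_def by (rule termdiffs_strong) (use r in auto)
  then obtain D where "DERIV h 0 :> D" by blast
  then have "((\<lambda>y. (h y - h 0) / (y - 0)) \<longlongrightarrow> D) (at 0)"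
    using has_field_derivative_iff by blast
  then have "eventually (\<lambda>y. dist ((h y - h 0) / (y - 0)) D < 1) (at 0)"
    by (rule tendstoD) simp
  then obtain d where d: "d > 0" "\<And>y. y \<noteq> 0 \<Longrightarrow> dist y 0 < d \<Longrightarrow> dist ((h y - h 0) / (y - 0)) D < 1"
    unfolding eventually_at by blast
  have hg: "\<And>t. \<bar>t\<bar> < r \<Longrightarrow> g t = h t" unfolding h_def using sm sums_unique by blast
  have h0: "h 0 = b 0" using hg[of 0] sm[of 0] r by (simp add: sums_iff)
  show ?thesis
  proof (intro exI conjI allI impI)
    show "min d r > 0" using d r by simp
    show "\<bar>D\<bar> + 1 > 0" by simp
    fix t :: real assume t: "\<bar>t\<bar> < min d r"
    show "\<bar>g t - b 0\<bar> \<le> (\<bar>D\<bar> + 1) * \<bar>t\<bar>"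
    proof (cases "t = 0")
      case True then show ?thesis using hg[of 0] h0 r by simp
    next
      case False
      have "dist ((h t - h 0) / t) D < 1" using d(2)[of t] False t by simp
      then have "\<bar>(h t - h 0) / t\<bar> \<le> \<bar>D\<bar> + 1" by (simp add: dist_real_def)
      then have "\<bar>h t - h 0\<bar> / \<bar>t\<bar> \<le> \<bar>D\<bar> + 1" by (simp add: abs_divide)
      then have "\<bar>h t - h 0\<bar> \<le> (\<bar>D\<bar> + 1) * \<bar>t\<bar>" using False by (simp add: divide_le_eq)
      then show ?thesis using hg[of t] t h0 by simp
    qed
  qed
qed

lemma analytic_lip:
  assumes "real_analytic_on f I" "x \<in> I"
  shows "\<exists>e>0. \<exists>C>0. \<forall>y. \<bar>y - x\<bar> < e \<longrightarrow> y \<in> I \<and> \<bar>f y - f x\<bar> \<le> C * \<bar>y - x\<bar>"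
proof -
  obtain r b where r: "r > 0" and sm: "\<And>y. \<bar>y - x\<bar> < r \<Longrightarrow> y \<in> I \<and> (\<lambda>n. b n * (y - x) ^ n) sums f y"
    using assms unfolding real_analytic_on_def by blast
  have fx: "f x = b 0" using sm[of x] r by simp
  have "\<And>t. \<bar>t\<bar> < r \<Longrightarrow> (\<lambda>n. b n * t^n) sums f (x + t)" using sm[of "x + _"] by auto
  from loc_lip[OF r this] obtain e C where eC: "e > 0" "C > 0" "\<And>t. \<bar>t\<bar> < e \<Longrightarrow> \<bar>f (x+t) - b 0\<bar> \<le> C * \<bar>t\<bar>"
    by blast
  show ?thesis
  proof (intro exI conjI allI impI)
    show "min e r > 0" "C > 0" using eC r by auto
    fix y assume y: "\<bar>y - x\<bar> < min e r"
    show "y \<in> I" using sm[of y] y by simp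
    show "\<bar>f y - f x\<bar> \<le> C * \<bar>y - x\<bar>" using eC(3)[of "y - x"] y fx by simp
  qed
qed

lemma powser_shift0:
  fixes a :: "nat \<Rightarrow> real"
  assumes "(\<lambda>n. a n * t^n) sums s"
  shows "(\<lambda>n. (a(0:=0)) n * t^n) sums (s - a 0)"
proof -
  have "(\<lambda>n. if n = 0 then a n * t^n else 0) sums (a 0 * t^0)" by (rule sums_single)
  from sums_diff[OF assms this] have "(\<lambda>n. a n * t ^ n - (if n = 0 then a n * t ^ n else 0)) sums (s - a 0)"
    by simp
  moreover have "(\<lambda>n. a n * t ^ n - (if n = 0 then a n * t ^ n else 0)) = (\<lambda>n. (a(0:=0)) n * t^n)"
    by (rule ext) auto
  ultimately show ?thesis by simp
qed

lemma dich:
  assumes an: "real_analytic_on f I" and x: "x \<in> I"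
  shows "(\<exists>e>0. \<forall>y. \<bar>y-x\<bar> < e \<longrightarrow> f y = c) \<or> (\<exists>e>0. \<forall>y. y \<noteq> x \<and> \<bar>y-x\<bar> < e \<longrightarrow> f y \<noteq> c)"
proof -
  obtain r b where r: "r > 0" and sm: "\<And>y. \<bar>y - x\<bar> < r \<Longrightarrow> y \<in> I \<and> (\<lambda>n. b n * (y - x) ^ n) sums f y"
    using assms unfolding real_analytic_on_def by blast
  have fx: "f x = b 0" using sm[of x] r by simp
  show ?thesis
  proof (cases "f x = c")
    case False
    obtain e C where eC: "e > 0" "C > 0" "\<And>y. \<bar>y - x\<bar> < e \<Longrightarrow> \<bar>f y - f x\<bar> \<le> C * \<bar>y - x\<bar>"
      using analytic_lip[OF an x] by blast
    have "\<forall>y. y \<noteq> x \<and> \<bar>y-x\<bar> < min e (\<bar>f x - c\<bar> / C) \<longrightarrow> f y \<noteq> c"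
    proof (intro allI impI)
      fix y assume y: "y \<noteq> x \<and> \<bar>y-x\<bar> < min e (\<bar>f x - c\<bar> / C)"
      then have "C * \<bar>y - x\<bar> < \<bar>f x - c\<bar>" using eC by (simp add: field_simps)
      then show "f y \<noteq> c" using eC(3)[of y] y by auto
    qed
    moreover have "min e (\<bar>f x - c\<bar> / C) > 0" using eC False by simp
    ultimately show ?thesis by blast
  next
    case True
    show ?thesis
    proof (cases "\<exists>m>0. b m \<noteq> 0")
      case True
      then obtain m where m: "m > 0" "b m \<noteq> 0" by blast
      have sm': "\<And>y. norm (y - x) < r \<Longrightarrow> (\<lambda>n. (b(0:=0)) n * (y - x)^n) sums (f y - b 0)"
        using sm powser_shift0 by auto
      obtain s where s: "s > 0" "\<And>z. z \<in> cball x s - {x} \<Longrightarrow> f z - b 0 \<noteq> 0"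
        using powser_0_nonzero[of r x "b(0:=0)" "\<lambda>y. f y - b 0" m, OF r sm'] m fx by auto
      have "\<forall>y. y \<noteq> x \<and> \<bar>y-x\<bar> < s \<longrightarrow> f y \<noteq> c"
      proof (intro allI impI)
        fix y assume y: "y \<noteq> x \<and> \<bar>y-x\<bar> < s"
        then have "y \<in> cball x s - {x}" by (auto simp: dist_real_def)
        then show "f y \<noteq> c" using s(2) \<open>f x = c\<close> fx by auto
      qed
      then show ?thesis using s by blast
    next
      case False
      have "\<forall>y. \<bar>y-x\<bar> < r \<longrightarrow> f y = c"
      proof (intro allI impI)
        fix y assume y: "\<bar>y-x\<bar> < r"
        have "(\<lambda>n. if n = 0 then b n * (y-x)^n else 0) sums (b 0 * (y-x)^0)" by (rule sums_single)
        moreover have "(\<lambda>n. if n = 0 then b n * (y-x)^n else 0) = (\<lambda>n. b n * (y-x)^n)"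
          using False by (intro ext) (simp, metis neq0_conv)
        ultimately have "(\<lambda>n. b n * (y-x)^n) sums b 0" by simp
        then show "f y = c" using sm[OF y] sums_unique2 fx \<open>f x = c\<close> by metis
      qed
      then show ?thesis using r by blast
    qed
  qed
qed


lemma approx_finite:
  fixes z :: real and X :: int
  shows "finite {(y::int, x::int). 1 \<le> x \<and> x \<le> X \<and> \<bar>z - y/x\<bar> \<le> 1}"
proof -
  define K where "K = \<lceil>(\<bar>z\<bar> + 1) * X\<rceil>"
  have "{(y::int, x::int). 1 \<le> x \<and> x \<le> X \<and> \<bar>z - y/x\<bar> \<le> 1} \<subseteq> {-K..K} \<times> {1..X}"
  proof
    fix u assume "u \<in> {(y::int, x::int). 1 \<le> x \<and> x \<le> X \<and> \<bar>z - y/x\<bar> \<le> 1}"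
    then obtain y x where u: "u = (y,x)" and h: "1 \<le> x" "x \<le> X" "\<bar>z - y/x\<bar> \<le> 1" by auto
    have "\<bar>real_of_int y / x\<bar> \<le> \<bar>z\<bar> + 1" using h(3) by linarith
    then have "\<bar>real_of_int y\<bar> \<le> (\<bar>z\<bar> + 1) * x" using h(1) by (simp add: abs_divide divide_le_eq)
    also have "\<dots> \<le> (\<bar>z\<bar> + 1) * X" using h(2) by (intro mult_left_mono) auto
    finally have "real_of_int \<bar>y\<bar> \<le> (\<bar>z\<bar> + 1) * X" by simp
    also have "\<dots> \<le> real_of_int K" unfolding K_def by (rule le_of_int_ceiling)
    finally have "\<bar>y\<bar> \<le> K" by linarith
    then show "u \<in> {-K..K} \<times> {1..X}" using h u by auto
  qed
  then show ?thesis by (rule finite_subset) auto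
qed

lemma irr_sep:
  fixes z :: real and X :: int
  assumes "z \<notin> \<rat>"
  shows "\<exists>d>0. \<forall>(y::int) (x::int). 1 \<le> x \<and> x \<le> X \<longrightarrow> d \<le> \<bar>z - y/x\<bar>"
proof -
  define F where "F = {(y::int, x::int). 1 \<le> x \<and> x \<le> X \<and> \<bar>z - y/x\<bar> \<le> 1}"
  define D where "D = insert 1 ((\<lambda>(y,x). \<bar>z - real_of_int y / real_of_int x\<bar>) ` F)"
  have fin: "finite D" unfolding D_def F_def using approx_finite by auto
  have pos: "\<forall>a\<in>D. a > 0"
  proof
    fix a assume "a \<in> D"
    then consider "a = 1" | y x where "a = \<bar>z - real_of_int y / real_of_int x\<bar>" unfolding D_def by auto
    then show "a > 0"
    proof cases
      case (2 y x)
      have "real_of_int y / real_of_int x \<in> \<rat>" by simp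
      then have "z \<noteq> real_of_int y / real_of_int x" using assms by auto
      then show ?thesis using 2 by simp
    qed simp
  qed
  have m0: "Min D > 0" using fin pos unfolding D_def by (subst Min_gr_iff) auto
  have "\<forall>(y::int) (x::int). 1 \<le> x \<and> x \<le> X \<longrightarrow> Min D \<le> \<bar>z - real_of_int y/real_of_int x\<bar>"
  proof (intro allI impI)
    fix y x :: int assume h: "1 \<le> x \<and> x \<le> X"
    show "Min D \<le> \<bar>z - real_of_int y/real_of_int x\<bar>"
    proof (cases "\<bar>z - real_of_int y/real_of_int x\<bar> \<le> 1")
      case True
      then have "(y,x) \<in> F" unfolding F_def using h by simp
      then have "\<bar>z - real_of_int y/real_of_int x\<bar> \<in> D" unfolding D_def by (intro insertI2 image_eqI[where x="(y,x)"]) auto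
      then show ?thesis using fin by simp
    next
      case False
      have "Min D \<le> 1" using fin unfolding D_def by simp
      then show ?thesis using False by linarith
    qed
  qed
  then show ?thesis using m0 by blast
qed

lemma reduce_frac:
  fixes y x :: int assumes "x \<ge> 1"
  obtains p q where "q > 0" "coprime p q" "real_of_int y / x = real_of_int p / q" "q \<le> x"
proof -
  have "real_of_int y / x \<in> \<rat>" by simp
  then obtain p q where pq: "q > 0" "coprime p q" "real_of_int y / x = real_of_int p / q"
    by (rule Rats_cases')
  then have "real_of_int (p * x) = real_of_int (y * q)" using assms by (simp add: field_simps)
  then have e: "p * x = y * q" by linarith
  have "q dvd p * x" unfolding e by simp
  then have "q dvd x" using pq(2) by (simp add: coprime_commute coprime_dvd_mult_right_iff)
  then have "q \<le> x" using assms by (simp add: zdvd_imp_le)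
  then show ?thesis using that pq by blast
qed



theorem corollary2p2:
  fixes f :: "real \<Rightarrow> real" and I :: "real set"
  assumes "open_interval I"
    and "real_analytic_on f I"
    and "\<not> (\<exists>c. \<forall>x\<in>I. f x = c)"
    and "\<forall>x\<in>I. x \<in> \<rat> \<longrightarrow> f x \<in> \<rat>"
    and "\<exists>\<eta>::real. \<forall>(p::int) (q::int) (p'::int) (q'::int).
           q \<ge> 2 \<and> coprime p q \<and> real_of_int p / real_of_int q \<in> I \<and>
           q' \<ge> 1 \<and> coprime p' q' \<and>
           f (real_of_int p / real_of_int q) = real_of_int p' / real_of_int q'
           \<longrightarrow> real_of_int q' \<le> real_of_int q powr \<eta>"
  shows "f ` (liouville_set \<inter> I) \<subseteq> liouville_set"
proof
  obtain \<eta>0 where H0: "\<forall>(p::int) (q::int) (p'::int) (q'::int).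
           q \<ge> 2 \<and> coprime p q \<and> real_of_int p / real_of_int q \<in> I \<and>
           q' \<ge> 1 \<and> coprime p' q' \<and>
           f (real_of_int p / real_of_int q) = real_of_int p' / real_of_int q'
           \<longrightarrow> real_of_int q' \<le> real_of_int q powr \<eta>0" using assms(5) by blast
  define \<eta> where "\<eta> = max \<eta>0 1"
  have eta1: "\<eta> \<ge> 1" unfolding \<eta>_def by simp
  have H: "real_of_int q' \<le> real_of_int q powr \<eta>"
    if "q \<ge> 2" "coprime p q" "real_of_int p / real_of_int q \<in> I" "q' \<ge> 1" "coprime p' q'"
       "f (real_of_int p / real_of_int q) = real_of_int p' / real_of_int q'" for p q p' q' :: int
  proof -
    have "real_of_int q' \<le> real_of_int q powr \<eta>0" using H0 that by blast
    also have "\<dots> \<le> real_of_int q powr \<eta>" by (rule powr_mono) (use that in \<open>auto simp: \<eta>_def\<close>)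
    finally show ?thesis .
  qed
  fix w assume "w \<in> f ` (liouville_set \<inter> I)"
  then obtain \<zeta> where \<zeta>: "\<zeta> \<in> liouville_set" "\<zeta> \<in> I" and w: "w = f \<zeta>" by blast
  define \<xi> where "\<xi> = f \<zeta>"
  have \<zeta>irr: "\<zeta> \<notin> \<rat>" using \<zeta>(1) unfolding liouville_set_def by blast
  have \<zeta>L: "\<And>N. N > 0 \<Longrightarrow> infinite {(y::int, x::int). x \<ge> 1 \<and>
          \<bar>\<zeta> - real_of_int y / real_of_int x\<bar> \<le> real_of_int x powr (- N)}"
    using \<zeta>(1) unfolding liouville_set_def by blast
  define A where "A = {x. \<exists>e>0. \<forall>y. \<bar>y-x\<bar> < e \<longrightarrow> f y = \<xi>}"
  define V where "V = {x. \<exists>e>0. \<forall>y. \<bar>y-x\<bar> < e \<longrightarrow> y \<notin> A}"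
  have Af: "f x = \<xi>" if "x \<in> A" for x using that unfolding A_def by force
  have openA: "open A" unfolding open_dist
  proof (intro ballI)
    fix x assume "x \<in> A"
    then obtain e where e: "e > 0" "\<forall>y. \<bar>y-x\<bar> < e \<longrightarrow> f y = \<xi>" unfolding A_def by blast
    show "\<exists>e>0. \<forall>y. dist y x < e \<longrightarrow> y \<in> A"
    proof (intro exI conjI allI impI)
      show "e > 0" by fact
      fix y assume y: "dist y x < e"
      have "\<forall>z. \<bar>z-y\<bar> < e - \<bar>y - x\<bar> \<longrightarrow> f z = \<xi>" using e y by (auto simp: dist_real_def)
      moreover have "e - \<bar>y - x\<bar> > 0" using y by (simp add: dist_real_def)
      ultimately show "y \<in> A" unfolding A_def by blast
    qed
  qed
  have openV: "open V" unfolding open_dist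
  proof (intro ballI)
    fix x assume "x \<in> V"
    then obtain e where e: "e > 0" "\<forall>y. \<bar>y-x\<bar> < e \<longrightarrow> y \<notin> A" unfolding V_def by blast
    show "\<exists>e>0. \<forall>y. dist y x < e \<longrightarrow> y \<in> V"
    proof (intro exI conjI allI impI)
      show "e > 0" by fact
      fix y assume y: "dist y x < e"
      have "\<forall>z. \<bar>z-y\<bar> < e - \<bar>y - x\<bar> \<longrightarrow> z \<notin> A" using e y by (auto simp: dist_real_def)
      moreover have "e - \<bar>y - x\<bar> > 0" using y by (simp add: dist_real_def)
      ultimately show "y \<in> V" unfolding V_def by blast
    qed
  qed
  have disj: "A \<inter> V \<inter> I = {}" unfolding V_def by force
  have cover: "I \<subseteq> A \<union> V"
  proof
    fix x assume x: "x \<in> I"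
    from dich[OF assms(2) x, of \<xi>] show "x \<in> A \<union> V"
    proof
      assume "\<exists>e>0. \<forall>y. \<bar>y-x\<bar> < e \<longrightarrow> f y = \<xi>"
      then show ?thesis unfolding A_def by blast
    next
      assume "\<exists>e>0. \<forall>y. y \<noteq> x \<and> \<bar>y-x\<bar> < e \<longrightarrow> f y \<noteq> \<xi>"
      then obtain e where e: "e > 0" "\<forall>y. y \<noteq> x \<and> \<bar>y-x\<bar> < e \<longrightarrow> f y \<noteq> \<xi>" by blast
      show ?thesis
      proof (cases "x \<in> A")
        case False
        have "\<forall>y. \<bar>y-x\<bar> < e \<longrightarrow> y \<notin> A" using e Af False by metis
        then show ?thesis unfolding V_def using e by blast
      qed simp
    qed
  qed
  have "connected I" using assms(1) is_interval_connected unfolding open_interval_def by blast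
  from connectedD[OF this openA openV disj cover] have "A \<inter> I = {} \<or> V \<inter> I = {}" .
  moreover have "V \<inter> I \<noteq> {}"
  proof
    assume "V \<inter> I = {}"
    then have "\<forall>x\<in>I. f x = \<xi>" using cover Af by blast
    then show False using assms(3) by blast
  qed
  ultimately have "\<zeta> \<notin> A" using \<zeta>(2) by blast
  then obtain e1 where e1: "e1 > 0" "\<forall>y. y \<noteq> \<zeta> \<and> \<bar>y-\<zeta>\<bar> < e1 \<longrightarrow> f y \<noteq> \<xi>"
    using dich[OF assms(2) \<zeta>(2), of \<xi>] unfolding A_def by blast
  obtain e2 C where e2: "e2 > 0" "C > 0" "\<forall>y. \<bar>y - \<zeta>\<bar> < e2 \<longrightarrow> y \<in> I \<and> \<bar>f y - f \<zeta>\<bar> \<le> C * \<bar>y - \<zeta>\<bar>"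
    using analytic_lip[OF assms(2) \<zeta>(2)] by blast
  define \<delta> where "\<delta> = min e1 e2"
  have \<delta>0: "\<delta> > 0" using e1 e2 unfolding \<delta>_def by simp
  have loc: "x \<in> I \<and> 0 < \<bar>f x - \<xi>\<bar> \<and> \<bar>f x - \<xi>\<bar> \<le> C * \<bar>x - \<zeta>\<bar>"
    if "x \<noteq> \<zeta>" "\<bar>x - \<zeta>\<bar> < \<delta>" for x
    using that e1 e2 unfolding \<delta>_def \<xi>_def by auto
  have key: "\<exists>(y'::int) (x'::int). x' \<ge> 1 \<and> 0 < \<bar>\<xi> - y'/x'\<bar> \<and> \<bar>\<xi> - y'/x'\<bar> < \<epsilon>
               \<and> \<bar>\<xi> - y'/x'\<bar> \<le> real_of_int x' powr (-M)"
    if M: "M > 0" and \<epsilon>: "\<epsilon> > 0" for M \<epsilon> :: real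
  proof -
    define N where "N = \<eta> * M + 1"
    have N0: "N > 0" unfolding N_def using eta1 M by (simp add: add_pos_nonneg)
    define Xi where "Xi = \<lceil>max 2 C\<rceil>"
    obtain d where d: "d > 0" "\<forall>(y::int) (x::int). 1 \<le> x \<and> x \<le> Xi \<longrightarrow> d \<le> \<bar>\<zeta> - y/x\<bar>"
      using irr_sep[OF \<zeta>irr] by blast
    define \<rho> where "\<rho> = min (min d \<delta>) (\<epsilon>/C)"
    have \<rho>0: "\<rho> > 0" unfolding \<rho>_def using d \<delta>0 \<epsilon> e2 by simp
    define B where "B = \<lceil>\<rho> powr (-1/N)\<rceil>"
    have "\<not> {(y::int, x::int). x \<ge> 1 \<and> \<bar>\<zeta> - real_of_int y / real_of_int x\<bar> \<le> real_of_int x powr (- N)}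
           \<subseteq> {(y::int, x::int). 1 \<le> x \<and> x \<le> B \<and> \<bar>\<zeta> - y/x\<bar> \<le> 1}"
      using \<zeta>L[OF N0] approx_finite[of B \<zeta>] finite_subset by blast
    then obtain y x :: int where yx: "x \<ge> 1" "\<bar>\<zeta> - y/x\<bar> \<le> real_of_int x powr (-N)"
       "\<not> (x \<le> B \<and> \<bar>\<zeta> - y/x\<bar> \<le> 1)" by auto
    have "real_of_int x powr (-N) \<le> 1 powr (-N)"
      by (rule powr_mono2') (use N0 yx(1) in auto)
    then have "x > B" using yx by auto
    then have "real_of_int B < real_of_int x" by simp
    moreover have "\<rho> powr (-1/N) \<le> real_of_int B" unfolding B_def by (rule le_of_int_ceiling)
    ultimately have "real_of_int x > \<rho> powr (-1/N)" by linarith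
    then have "real_of_int x powr (-N) < (\<rho> powr (-1/N)) powr (-N)"
      by (intro powr_less_mono2_neg) (use N0 \<rho>0 in auto)
    also have "(\<rho> powr (-1/N)) powr (-N) = \<rho>" using N0 \<rho>0 by (simp add: powr_powr)
    finally have close: "\<bar>\<zeta> - y/x\<bar> < \<rho>" using yx(2) by linarith
    obtain p q where pq: "q > 0" "coprime p q" "real_of_int y / x = real_of_int p / q" "q \<le> x"
      using reduce_frac[OF yx(1)] by blast
    have cl: "\<bar>\<zeta> - p/q\<bar> < \<rho>" using close pq by simp
    have qX: "q > Xi"
    proof (rule ccontr)
      assume "\<not> q > Xi"
      then have "d \<le> \<bar>\<zeta> - p/q\<bar>" using d(2) pq(1) by auto
      then show False using cl unfolding \<rho>_def by linarith
    qed
    have q2: "q \<ge> 2" using qX unfolding Xi_def by linarith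
    have qC: "real_of_int q > C" using qX unfolding Xi_def by linarith
    have "\<bar>\<zeta> - p/q\<bar> \<le> real_of_int x powr (-N)" using yx(2) pq by simp
    also have "\<dots> \<le> real_of_int q powr (-N)"
      by (rule powr_mono2') (use N0 pq in auto)
    finally have qN: "\<bar>\<zeta> - p/q\<bar> \<le> real_of_int q powr (-N)" .
    have "real_of_int p / real_of_int q \<in> \<rat>" by simp
    then have ne: "real_of_int p / real_of_int q \<noteq> \<zeta>" using \<zeta>irr by auto
    have "\<bar>real_of_int p / real_of_int q - \<zeta>\<bar> < \<delta>" using cl unfolding \<rho>_def by (simp add: abs_minus_commute)
    from loc[OF ne this] have L: "real_of_int p / real_of_int q \<in> I"
      "0 < \<bar>f (p/q) - \<xi>\<bar>" "\<bar>f (p/q) - \<xi>\<bar> \<le> C * \<bar>p/q - \<zeta>\<bar>" by auto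
    have "f (p/q) \<in> \<rat>" using assms(4) L(1) \<open>real_of_int p / real_of_int q \<in> \<rat>\<close> by blast
    then obtain p' q' where pq': "q' > 0" "coprime p' q'" "f (p/q) = real_of_int p' / real_of_int q'"
      by (rule Rats_cases')
    have q'b: "real_of_int q' \<le> real_of_int q powr \<eta>"
      using H[of q p q' p'] q2 pq L(1) pq' by simp
    have dist_eq: "\<bar>\<xi> - p'/q'\<bar> = \<bar>f (p/q) - \<xi>\<bar>" using pq' by (simp add: abs_minus_commute)
    have b1: "\<bar>f (p/q) - \<xi>\<bar> \<le> C * real_of_int q powr (-N)"
    proof -
      have "C * \<bar>p/q - \<zeta>\<bar> \<le> C * real_of_int q powr (-N)"
        using qN e2(2) by (intro mult_left_mono) (auto simp: abs_minus_commute)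
      then show ?thesis using L(3) by linarith
    qed
    have "real_of_int q powr (-N) = real_of_int q powr (-(\<eta>*M)) / real_of_int q"
      using pq(1) by (simp add: N_def powr_add powr_minus_divide powr_diff)
    then have "C * real_of_int q powr (-N) = (C / real_of_int q) * real_of_int q powr (-(\<eta>*M))"
      by simp
    also have "\<dots> < real_of_int q powr (-(\<eta>*M))"
    proof -
      have P: "real_of_int q powr (-(\<eta>*M)) > 0" using pq(1) by simp
      have "C / real_of_int q < 1" using qC e2(2) by simp
      from mult_strict_right_mono[OF this P] show ?thesis by simp
    qed
    also have "real_of_int q powr (-(\<eta>*M)) = (real_of_int q powr \<eta>) powr (-M)"
      by (simp add: powr_powr)
    also have "\<dots> \<le> real_of_int q' powr (-M)"
      by (rule powr_mono2') (use M pq' q'b in auto)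
    finally have b2: "\<bar>\<xi> - p'/q'\<bar> \<le> real_of_int q' powr (-M)" using b1 dist_eq by linarith
    have "C * \<bar>p/q - \<zeta>\<bar> < C * \<rho>" using cl e2(2) by (simp add: abs_minus_commute)
    also have "C * \<rho> \<le> \<epsilon>" unfolding \<rho>_def using e2(2) by (simp add: field_simps min_def)
    finally have b3: "\<bar>\<xi> - p'/q'\<bar> < \<epsilon>" using L(3) dist_eq by linarith
    show ?thesis using b2 b3 L(2) dist_eq pq'(1) by (intro exI[of _ p'] exI[of _ q']) auto
  qed
  have \<xi>irr: "\<xi> \<notin> \<rat>"
  proof
    assume "\<xi> \<in> \<rat>"
    then obtain a b :: int where ab: "b > 0" "\<xi> = a / b" by (rule Rats_cases')
    obtain y' x' :: int where k: "x' \<ge> 1" "0 < \<bar>\<xi> - y'/x'\<bar>" "\<bar>\<xi> - y'/x'\<bar> < 1/(b*b)"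
      "\<bar>\<xi> - y'/x'\<bar> \<le> real_of_int x' powr (-2)"
      using key[of 2 "1/(b*b)"] ab by auto
    have eq: "\<xi> - y'/x' = real_of_int (a*x' - b*y') / real_of_int (b*x')"
      using ab k(1) by (simp add: field_simps)
    have "a*x' - b*y' \<noteq> 0"
    proof
      assume h: "a*x' - b*y' = 0"
      have "\<xi> - y'/x' = 0" by (metis eq h div_0 of_int_0)
      then show False using k(2) by simp
    qed
    then have "\<bar>real_of_int (a*x' - b*y')\<bar> \<ge> 1" by linarith
    moreover have bx: "real_of_int (b*x') > 0" using ab k by simp
    ultimately have lo: "\<bar>\<xi> - y'/x'\<bar> \<ge> 1 / real_of_int (b*x')"
      unfolding eq by (simp add: abs_divide divide_right_mono)
    have "real_of_int x' powr (-2) = 1 / (real_of_int x' * real_of_int x')"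
      using k(1) by (simp add: powr_minus_divide power2_eq_square flip: powr_realpow)
    then have "1 / (real_of_int b * real_of_int x') \<le> 1 / (real_of_int x' * real_of_int x')"
      using lo k(4) by simp
    then have "real_of_int x' \<le> real_of_int b" using k(1) ab(1)
      by (simp add: frac_le_eq divide_le_eq field_simps)
    then have "1 / (real_of_int b * real_of_int b) \<le> 1 / (real_of_int b * real_of_int x')"
      using k(1) ab(1) by (intro divide_left_mono mult_left_mono) auto
    then show False using lo k(3) by simp
  qed
  have inf: "infinite {(y::int, x::int). x \<ge> 1 \<and> \<bar>\<xi> - real_of_int y / real_of_int x\<bar> \<le> real_of_int x powr (- M)}"
    if M: "M > 0" for M :: real
  proof
    define S where "S = {(y::int, x::int). x \<ge> 1 \<and> \<bar>\<xi> - real_of_int y / real_of_int x\<bar> \<le> real_of_int x powr (- M)}"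
    assume "finite S"
    define D where "D = insert 1 ((\<lambda>(y,x). \<bar>\<xi> - real_of_int y / real_of_int x\<bar>) ` S)"
    have fin: "finite D" unfolding D_def using \<open>finite S\<close> by auto
    have pos: "\<forall>a\<in>D. a > 0"
    proof
      fix a assume "a \<in> D"
      then consider "a = 1" | y x where "a = \<bar>\<xi> - real_of_int y / real_of_int x\<bar>" unfolding D_def by auto
      then show "a > 0"
      proof cases
        case (2 y x)
        have "real_of_int y / real_of_int x \<in> \<rat>" by simp
        then have "\<xi> \<noteq> real_of_int y / real_of_int x" using \<xi>irr by auto
        then show ?thesis using 2 by simp
      qed simp
    qed
    have m0: "Min D > 0" using fin pos unfolding D_def by (subst Min_gr_iff) auto
    obtain y' x' :: int where k: "x' \<ge> 1" "\<bar>\<xi> - y'/x'\<bar> < Min D" "\<bar>\<xi> - y'/x'\<bar> \<le> real_of_int x' powr (-M)"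
      using key[OF M m0] by blast
    then have "(y', x') \<in> S" unfolding S_def by simp
    then have "\<bar>\<xi> - y'/x'\<bar> \<in> D" unfolding D_def by (intro insertI2 image_eqI[where x="(y',x')"]) auto
    then have "Min D \<le> \<bar>\<xi> - y'/x'\<bar>" using fin by simp
    then show False using k(2) by linarith
  qed
  show "w \<in> liouville_set" unfolding liouville_set_def w \<xi>_def[symmetric] using \<xi>irr inf by blast
qed

end
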